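(* Let $F(\xi,p)=(\sigma(\xi),f_{\xi_0}(p))$ be a step skew-product on $\Sigma_N\times I$, $I=[0,1]$, with $f_i$ $C^1$-diffeomorphisms onto their images, and let $\mathcal I_P,\mathcal I_R,A,\Sigma_A,\sigma_A,\pi$, $\overline{\,\cdot\,}$ be as in the context. Let $R(x)=1-x$ and let $G(\omega,x)=(\sigma_A(\omega),g_{\omega_0}(x))$ on $\Sigma_A\times I$ with $g_i=f_i$, $g_{i+N}=R\circ f_i\circ R$ for $i\in\mathcal I_P$ and $g_i=R\circ f_i$, $g_{i+N}=f_i\circ R$ for $i\in\mathcal I_R$. Let $C=\{\omega\in\Sigma_A\colon\omega_0\in\{1,\ldots,N\}\}$ and define $\Pi\colon\Sigma_A\times I\to\Sigma_N\times I$ by $\Pi(\omega,x)=(\pi(\omega),x)$ if $\omega\in C$ and $\Pi(\omega,x)=(\pi(\omega),R(x))$ otherwise. Then $\Pi$ is a two-to-one semi-conjugation between $G$ and $F$, i.e. $\Pi$ is continuous, surjective, every point has exactly two preimages, and $\Pi\circ G=F\circ\Pi$.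
   Context: $\mathcal I_P$ (resp. $\mathcal I_R$) is the set of $i$ such that $f_i$ preserves (resp. reverses) orientation. $A=(a_{ij})_{i,j=1}^{2N}$ with $a_{ij}=1$ if ($i\in\mathcal I_P$, $j\le N$), or ($i\in\mathcal I_R$, $j>N$), or ($i-N\in\mathcal I_P$, $j>N$), or ($i-N\in\mathcal I_R$, $j\le N$), and $a_{ij}=0$ otherwise. $\Sigma_A$ is the set of sequences $\omega\in\{1,\ldots,2N\}^{\mathbb Z}$ with $a_{\omega_n\omega_{n+1}}=1$ for all $n$, $\sigma_A$ its shift; $\overline i=i$ for $i\le N$, $\overline i=i-N$ for $i>N$; $\pi(\omega)_n=\overline{\omega_n}$. *)

theory Defs
  imports "HOL-Analysis.Analysis"
begin

definition Sigma_full :: "nat \<Rightarrow> (int \<Rightarrow> nat) set" where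
  "Sigma_full N = {\<xi>. \<forall>n. \<xi> n \<in> {1..N}}"

definition shift :: "(int \<Rightarrow> nat) \<Rightarrow> (int \<Rightarrow> nat)" where
  "shift \<xi> = (\<lambda>n. \<xi> (n + 1))"

definition seq_top :: "(int \<Rightarrow> nat) topology" where
  "seq_top = product_topology (\<lambda>_. discrete_topology (UNIV::nat set)) UNIV"

definition C1_diffeo_onto_image :: "(real \<Rightarrow> real) \<Rightarrow> bool" where
  "C1_diffeo_onto_image f \<longleftrightarrow>
     (\<exists>f'. (\<forall>x\<in>{0..1}. (f has_real_derivative f' x) (at x within {0..1}))
          \<and> continuous_on {0..1} f' \<and> (\<forall>x\<in>{0..1}. f' x \<noteq> 0))
     \<and> inj_on f {0..1}"

definition orient_pres :: "(real \<Rightarrow> real) \<Rightarrow> bool" where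
  "orient_pres f \<longleftrightarrow> (\<forall>x\<in>{0..1}. \<forall>y\<in>{0..1}. x < y \<longrightarrow> f x < f y)"

definition orient_rev :: "(real \<Rightarrow> real) \<Rightarrow> bool" where
  "orient_rev f \<longleftrightarrow> (\<forall>x\<in>{0..1}. \<forall>y\<in>{0..1}. x < y \<longrightarrow> f y < f x)"

definition IP :: "nat \<Rightarrow> (nat \<Rightarrow> real \<Rightarrow> real) \<Rightarrow> nat set" where
  "IP N f = {i\<in>{1..N}. orient_pres (f i)}"

definition IR :: "nat \<Rightarrow> (nat \<Rightarrow> real \<Rightarrow> real) \<Rightarrow> nat set" where
  "IR N f = {i\<in>{1..N}. orient_rev (f i)}"

definition amat :: "nat \<Rightarrow> (nat \<Rightarrow> real \<Rightarrow> real) \<Rightarrow> nat \<Rightarrow> nat \<Rightarrow> nat" where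
  "amat N f i j =
     (if (i \<in> IP N f \<and> j \<le> N) \<or> (i \<in> IR N f \<and> j > N)
         \<or> (i > N \<and> i - N \<in> IP N f \<and> j > N) \<or> (i > N \<and> i - N \<in> IR N f \<and> j \<le> N)
      then 1 else 0)"

definition Sigma_A :: "nat \<Rightarrow> (nat \<Rightarrow> real \<Rightarrow> real) \<Rightarrow> (int \<Rightarrow> nat) set" where
  "Sigma_A N f = {\<omega>. (\<forall>n. \<omega> n \<in> {1..2*N}) \<and> (\<forall>n. amat N f (\<omega> n) (\<omega> (n + 1)) = 1)}"

definition bar :: "nat \<Rightarrow> nat \<Rightarrow> nat" where
  "bar N i = (if i \<le> N then i else i - N)"

definition proj :: "nat \<Rightarrow> (int \<Rightarrow> nat) \<Rightarrow> (int \<Rightarrow> nat)" where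
  "proj N \<omega> = (\<lambda>n. bar N (\<omega> n))"

definition Rfl :: "real \<Rightarrow> real" where
  "Rfl x = 1 - x"

definition gmap :: "nat \<Rightarrow> (nat \<Rightarrow> real \<Rightarrow> real) \<Rightarrow> nat \<Rightarrow> real \<Rightarrow> real" where
  "gmap N f i =
     (if i \<le> N then (if i \<in> IP N f then f i else Rfl \<circ> f i)
      else (if i - N \<in> IP N f then Rfl \<circ> f (i - N) \<circ> Rfl else f (i - N) \<circ> Rfl))"

definition Fskew :: "(nat \<Rightarrow> real \<Rightarrow> real) \<Rightarrow> (int \<Rightarrow> nat) \<times> real \<Rightarrow> (int \<Rightarrow> nat) \<times> real" where
  "Fskew f z = (shift (fst z), f (fst z 0) (snd z))"

definition Gskew :: "nat \<Rightarrow> (nat \<Rightarrow> real \<Rightarrow> real) \<Rightarrow> (int \<Rightarrow> nat) \<times> real \<Rightarrow> (int \<Rightarrow> nat) \<times> real" where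
  "Gskew N f z = (shift (fst z), gmap N f (fst z 0) (snd z))"

definition BigPi :: "nat \<Rightarrow> (int \<Rightarrow> nat) \<times> real \<Rightarrow> (int \<Rightarrow> nat) \<times> real" where
  "BigPi N z = (proj N (fst z), if fst z 0 \<in> {1..N} then snd z else Rfl (snd z))"

end

theory Submission
  imports Defs
begin

lemma dich:
  assumes "C1_diffeo_onto_image g"
  shows "orient_pres g \<noteq> orient_rev g"
proof -
  from assms obtain g' where d: "\<forall>x\<in>{0..1}. (g has_real_derivative g' x) (at x within {0..1})"
    and inj: "inj_on g {0..1}" unfolding C1_diffeo_onto_image_def by blast
  have c: "continuous_on {0..1::real} g" using d by (intro DERIV_continuous_on) auto
  have "strict_mono_on {0..1} g \<or> strict_antimono_on {0..1} g"
    using injective_eq_monotone_map[OF _ c] inj by (simp add: is_interval_cc)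
  hence "orient_pres g \<or> orient_rev g"
    unfolding orient_pres_def orient_rev_def monotone_on_def by blast
  moreover have "\<not> (orient_pres g \<and> orient_rev g)"
    unfolding orient_pres_def orient_rev_def
    by (metis atLeastAtMost_iff less_asym' zero_le_one zero_less_one order_refl)
  ultimately show ?thesis by blast
qed

lemma amat_char:
  assumes D: "\<forall>i\<in>{1..N}. orient_pres (f i) \<noteq> orient_rev (f i)"
    and i: "i \<in> {1..2*N}" and j: "j \<in> {1..2*N}"
  shows "amat N f i j = 1 \<longleftrightarrow> ((N < j) = ((N < i) \<noteq> (bar N i \<in> IR N f)))"
proof -
  have b: "bar N i \<in> {1..N}" using i unfolding bar_def by auto
  have "orient_pres (f (bar N i)) \<noteq> orient_rev (f (bar N i))" using D b by blast
  then show ?thesis using i j b unfolding amat_def IP_def IR_def bar_def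
    by (cases "i \<le> N") auto
qed

fun bp :: "(int \<Rightarrow> bool) \<Rightarrow> bool \<Rightarrow> nat \<Rightarrow> bool" where
  "bp r c 0 = c"
| "bp r c (Suc m) = (bp r c m \<noteq> r (int m))"

fun bm :: "(int \<Rightarrow> bool) \<Rightarrow> bool \<Rightarrow> nat \<Rightarrow> bool" where
  "bm r c 0 = c"
| "bm r c (Suc m) = (bm r c m \<noteq> r (- int m - 1))"

definition bseq :: "(int \<Rightarrow> bool) \<Rightarrow> bool \<Rightarrow> int \<Rightarrow> bool" where
  "bseq r c n = (if n \<ge> 0 then bp r c (nat n) else bm r c (nat (-n)))"

lemma bseq_0: "bseq r c 0 = c"
  by (simp add: bseq_def)

lemma bseq_step: "bseq r c (n+1) = (bseq r c n \<noteq> r n)"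
proof (cases "n \<ge> 0")
  case True
  then have "nat (n+1) = Suc (nat n)" by simp
  then show ?thesis using True by (simp add: bseq_def)
next
  case False
  show ?thesis
  proof (cases "n = -1")
    case True
    then show ?thesis by (auto simp add: bseq_def numeral_eq_Suc)
  next
    case F2: False
    define m where "m = nat (- n - 1)"
    have m1: "nat (-n) = Suc m" using False m_def by simp
    have m2: "nat (-(n+1)) = m" using m_def by simp
    have n: "n = - int m - 1" using False m_def by simp
    show ?thesis using False F2 m1 m2 unfolding bseq_def
      by (simp add: n) blast
  qed
qed

lemma bseq_unique:
  assumes "b 0 = c" and "\<forall>n. b (n+1) = (b n \<noteq> r n)"
  shows "b = bseq r c"
proof
  fix n :: int
  show "b n = bseq r c n"
  proof (induct n rule: int_induct[where k=0])
    case base then show ?case using assms by (simp add: bseq_0)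
  next
    case (step1 i) then show ?case using assms(2) bseq_step by simp
  next
    case (step2 i)
    have "b i = (b (i - 1) \<noteq> r (i - 1))" using assms(2)[rule_format, of "i - 1"] by simp
    moreover have "bseq r c i = (bseq r c (i - 1) \<noteq> r (i - 1))" using bseq_step[of r c "i - 1"] by simp
    ultimately show ?case using step2 by auto
  qed
qed

definition mkw :: "nat \<Rightarrow> (nat \<Rightarrow> real \<Rightarrow> real) \<Rightarrow> (int \<Rightarrow> nat) \<Rightarrow> bool \<Rightarrow> int \<Rightarrow> nat" where
  "mkw N f \<xi> c = (\<lambda>n. \<xi> n + (if bseq (\<lambda>k. \<xi> k \<in> IR N f) c n then N else 0))"

lemma fiber:
  assumes D: "\<forall>i\<in>{1..N}. orient_pres (f i) \<noteq> orient_rev (f i)"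
    and N: "N \<ge> 1" and xi: "\<xi> \<in> Sigma_full N" and x: "x \<in> {0..1::real}"
  shows "{z\<in>Sigma_A N f \<times> {0..1}. BigPi N z = (\<xi>, x)}
     = {(mkw N f \<xi> True, 1 - x), (mkw N f \<xi> False, x)}"
proof -
  let ?r = "\<lambda>k. \<xi> k \<in> IR N f"
  have xin: "\<xi> n \<in> {1..N}" for n using xi unfolding Sigma_full_def by auto
  have bar_mk: "bar N (mkw N f \<xi> c n) = \<xi> n" for c n
    using xin[of n] unfolding bar_def mkw_def by auto
  have gt_mk: "(N < mkw N f \<xi> c n) = bseq ?r c n" for c n
    using xin[of n] N unfolding mkw_def by auto
  have rng: "mkw N f \<xi> c n \<in> {1..2*N}" for c n
    using xin[of n] unfolding mkw_def by auto
  have inA: "mkw N f \<xi> c \<in> Sigma_A N f" for c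
    unfolding Sigma_A_def
  proof (intro CollectI conjI allI)
    fix n
    show "mkw N f \<xi> c n \<in> {1..2*N}" by (rule rng)
    show "amat N f (mkw N f \<xi> c n) (mkw N f \<xi> c (n + 1)) = 1"
      using amat_char[OF D rng rng, of c n c "n+1"] bar_mk gt_mk bseq_step[of ?r c n] by simp
  qed
  have Pi_mk: "BigPi N (mkw N f \<xi> c, if c then 1 - x else x) = (\<xi>, x)" for c
  proof -
    have "proj N (mkw N f \<xi> c) = \<xi>" unfolding proj_def using bar_mk by auto
    moreover have "(mkw N f \<xi> c 0 \<in> {1..N}) = (\<not> c)"
      using gt_mk[of c 0] rng[of c 0] bseq_0[of ?r c] by auto
    ultimately show ?thesis unfolding BigPi_def Rfl_def by auto
  qed
  have sub: "z = (mkw N f \<xi> True, 1 - x) \<or> z = (mkw N f \<xi> False, x)"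
    if z: "z \<in> Sigma_A N f \<times> {0..1}" "BigPi N z = (\<xi>, x)" for z
  proof -
    obtain \<omega> x' where zz: "z = (\<omega>, x')" by (cases z)
    have om: "\<omega> \<in> Sigma_A N f" and x': "x' \<in> {0..1}" using z zz by auto
    have orng: "\<omega> n \<in> {1..2*N}" for n using om unfolding Sigma_A_def by auto
    have oam: "amat N f (\<omega> n) (\<omega> (n+1)) = 1" for n using om unfolding Sigma_A_def by auto
    have pj: "proj N \<omega> = \<xi>" and sx: "(if \<omega> 0 \<in> {1..N} then x' else Rfl x') = x"
      using z(2) zz unfolding BigPi_def by auto
    have bo: "bar N (\<omega> n) = \<xi> n" for n using pj unfolding proj_def by metis
    define b where "b = (\<lambda>n. N < \<omega> n)"
    have oeq: "\<omega> n = \<xi> n + (if b n then N else 0)" for n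
      using bo[of n] orng[of n] unfolding b_def bar_def by auto
    have bstep: "\<forall>n. b (n+1) = (b n \<noteq> ?r n)"
      using amat_char[OF D orng orng] oam bo unfolding b_def by metis
    have "b = bseq ?r (b 0)" by (rule bseq_unique[OF refl bstep])
    then have "\<omega> = mkw N f \<xi> (b 0)" unfolding mkw_def using oeq by (metis)
    moreover have "x' = (if b 0 then 1 - x else x)"
      using sx orng[of 0] unfolding b_def Rfl_def by auto
    ultimately show ?thesis using zz by (cases "b 0") auto
  qed
  show ?thesis
  proof
    show "{z\<in>Sigma_A N f \<times> {0..1}. BigPi N z = (\<xi>, x)}
      \<subseteq> {(mkw N f \<xi> True, 1 - x), (mkw N f \<xi> False, x)}" using sub by blast
    show "{(mkw N f \<xi> True, 1 - x), (mkw N f \<xi> False, x)}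
      \<subseteq> {z\<in>Sigma_A N f \<times> {0..1}. BigPi N z = (\<xi>, x)}"
      using inA Pi_mk[of True] Pi_mk[of False] x by auto
  qed
qed

lemma commute:
  assumes D: "\<forall>i\<in>{1..N}. orient_pres (f i) \<noteq> orient_rev (f i)"
    and z: "z \<in> Sigma_A N f \<times> {0..1}"
  shows "BigPi N (Gskew N f z) = Fskew f (BigPi N z)"
proof -
  obtain \<omega> x where zz: "z = (\<omega>, x)" by (cases z)
  have om: "\<omega> \<in> Sigma_A N f" using z zz by auto
  have orng: "\<omega> n \<in> {1..2*N}" for n using om unfolding Sigma_A_def by auto
  have oam: "amat N f (\<omega> 0) (\<omega> 1) = 1" using om unfolding Sigma_A_def by (simp only: mem_Collect_eq) (metis add_0)
  have ch: "(N < \<omega> 1) = ((N < \<omega> 0) \<noteq> (bar N (\<omega> 0) \<in> IR N f))"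
    using amat_char[OF D orng[of 0] orng[of 1]] oam by simp
  have b0: "bar N (\<omega> 0) \<in> {1..N}" using orng[of 0] unfolding bar_def by auto
  have d: "(bar N (\<omega> 0) \<in> IP N f) = (bar N (\<omega> 0) \<notin> IR N f)"
    using D b0 unfolding IP_def IR_def by auto
  have s1: "shift (proj N \<omega>) = proj N (shift \<omega>)" unfolding shift_def proj_def by simp
  have L: "snd (BigPi N (Gskew N f z)) = (if \<omega> 1 \<le> N then gmap N f (\<omega> 0) x else 1 - gmap N f (\<omega> 0) x)"
    using orng[of 1] unfolding zz BigPi_def Gskew_def shift_def Rfl_def by simp
  have R: "snd (Fskew f (BigPi N z)) = f (bar N (\<omega> 0)) (if \<omega> 0 \<le> N then x else 1 - x)"
    using orng[of 0] unfolding zz BigPi_def Fskew_def proj_def Rfl_def by simp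
  have "snd (BigPi N (Gskew N f z)) = snd (Fskew f (BigPi N z))"
  proof (cases "\<omega> 0 \<le> N")
    case True
    have e0: "\<omega> 0 \<in> {1..N}" using True orng[of 0] by simp
    have bb: "bar N (\<omega> 0) = \<omega> 0" using True unfolding bar_def by simp
    show ?thesis
    proof (cases "\<omega> 0 \<in> IP N f")
      case True
      then have "\<omega> 1 \<le> N" using ch d bb \<open>\<omega> 0 \<le> N\<close> orng[of 1] by auto
      moreover have "gmap N f (\<omega> 0) = f (\<omega> 0)" using True \<open>\<omega> 0 \<le> N\<close> unfolding gmap_def by simp
      ultimately show ?thesis using L R e0 bb by simp
    next
      case False
      then have "\<not> \<omega> 1 \<le> N" using ch d bb \<open>\<omega> 0 \<le> N\<close> orng[of 1] by auto
      moreover have "gmap N f (\<omega> 0) = Rfl \<circ> f (\<omega> 0)" using False \<open>\<omega> 0 \<le> N\<close> unfolding gmap_def by simp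
      ultimately show ?thesis using L R e0 bb by (simp add: Rfl_def o_def)
    qed
  next
    case False
    have e0: "\<not> \<omega> 0 \<le> N" using False by simp
    have bb: "bar N (\<omega> 0) = \<omega> 0 - N" using False unfolding bar_def by simp
    show ?thesis
    proof (cases "\<omega> 0 - N \<in> IP N f")
      case True
      then have "\<not> \<omega> 1 \<le> N" using ch d bb False orng[of 1] by auto
      moreover have "gmap N f (\<omega> 0) = Rfl \<circ> f (\<omega> 0 - N) \<circ> Rfl" using True False unfolding gmap_def by simp
      ultimately show ?thesis using L R e0 bb by (simp add: Rfl_def o_def)
    next
      case F2: False
      then have "\<omega> 1 \<le> N" using ch d bb False orng[of 1] by auto
      moreover have "gmap N f (\<omega> 0) = f (\<omega> 0 - N) \<circ> Rfl" using F2 False unfolding gmap_def by simp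
      ultimately show ?thesis using L R e0 bb by (simp add: Rfl_def o_def)
    qed
  qed
  moreover have "fst (BigPi N (Gskew N f z)) = fst (Fskew f (BigPi N z))"
    using s1 unfolding zz BigPi_def Gskew_def Fskew_def by simp
  ultimately show ?thesis by (simp add: prod_eq_iff)
qed

lemma cont:
  "continuous_map
           (subtopology (prod_topology seq_top euclideanreal) S)
           (prod_topology seq_top euclideanreal)
           (BigPi N)"
proof -
  let ?X = "subtopology (prod_topology seq_top euclideanreal) S"
  have c0: "continuous_map ?X (discrete_topology UNIV) (\<lambda>z. fst z k)" for k
  proof -
    have "continuous_map seq_top (discrete_topology UNIV) (\<lambda>w. w k)"
      unfolding seq_top_def by (rule continuous_map_product_projection) simp
    then have "continuous_map (prod_topology seq_top euclideanreal) (discrete_topology UNIV) (\<lambda>z. fst z k)"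
      using continuous_map_compose[OF continuous_map_fst] by (simp add: o_def)
    then show ?thesis by (rule continuous_map_from_subtopology)
  qed
  have c1': "continuous_map ?X (product_topology (\<lambda>_. discrete_topology UNIV) UNIV) (proj N \<circ> fst)"
    unfolding continuous_map_componentwise_UNIV
  proof
    fix k
    have "continuous_map (discrete_topology UNIV) (discrete_topology UNIV) (bar N)" by simp
    from continuous_map_compose[OF c0[of k] this]
    show "continuous_map ?X (discrete_topology UNIV) (\<lambda>x. (proj N \<circ> fst) x k)"
      by (simp add: o_def proj_def)
  qed
  have c1: "continuous_map ?X seq_top (proj N \<circ> fst)"
    using c1' unfolding seq_top_def .
  have cs: "continuous_map ?X euclideanreal snd"
    by (rule continuous_map_from_subtopology) (rule continuous_map_snd)
  have cs2: "continuous_map ?X euclideanreal (\<lambda>z. 1 - snd z)"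
    using cs by (intro continuous_intros)
  have c2: "continuous_map ?X euclideanreal (\<lambda>z. if fst z 0 \<in> {1..N} then snd z else Rfl (snd z))"
    unfolding Rfl_def
    by (rule continuous_map_cases_function[where p="\<lambda>z. fst z 0" and U="{1..N}" and Z="discrete_topology UNIV", OF c0[of 0]])
       (auto intro: continuous_map_from_subtopology cs cs2)
  show ?thesis unfolding continuous_map_pairwise
    using c1 c2 by (simp add: o_def BigPi_def)
qed

theorem lemma3p5:
  fixes N :: nat and f :: "nat \<Rightarrow> real \<Rightarrow> real"
  assumes "N \<ge> 1"
    and "\<forall>i\<in>{1..N}. C1_diffeo_onto_image (f i) \<and> f i ` {0..1} \<subseteq> {0..1}"
  shows "continuous_map
           (subtopology (prod_topology seq_top euclideanreal) (Sigma_A N f \<times> {0..1}))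
           (subtopology (prod_topology seq_top euclideanreal) (Sigma_full N \<times> {0..1}))
           (BigPi N)
       \<and> BigPi N ` (Sigma_A N f \<times> {0..1}) = Sigma_full N \<times> {0..1}
       \<and> (\<forall>y\<in>Sigma_full N \<times> {0..1}. card {z\<in>Sigma_A N f \<times> {0..1}. BigPi N z = y} = 2)
       \<and> (\<forall>z\<in>Sigma_A N f \<times> {0..1}. BigPi N (Gskew N f z) = Fskew f (BigPi N z))"
proof -
  have D: "\<forall>i\<in>{1..N}. orient_pres (f i) \<noteq> orient_rev (f i)"
    using assms(2) dich by blast
  have img1: "BigPi N ` (Sigma_A N f \<times> {0..1}) \<subseteq> Sigma_full N \<times> {0..1}"
  proof
    fix y assume "y \<in> BigPi N ` (Sigma_A N f \<times> {0..1})"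
    then obtain \<omega> x where om: "\<omega> \<in> Sigma_A N f" and x: "x \<in> {0..1::real}" and y: "y = BigPi N (\<omega>, x)"
      by auto
    have onr: "\<omega> n \<in> {1..2*N}" for n using om unfolding Sigma_A_def by auto
    have "bar N (\<omega> n) \<in> {1..N}" for n using onr[of n] unfolding bar_def by auto
    then have "proj N \<omega> \<in> Sigma_full N" unfolding Sigma_full_def proj_def by auto
    then show "y \<in> Sigma_full N \<times> {0..1}" using x unfolding y BigPi_def Rfl_def by auto
  qed
  have img2: "Sigma_full N \<times> {0..1} \<subseteq> BigPi N ` (Sigma_A N f \<times> {0..1})"
  proof
    fix y assume "y \<in> Sigma_full N \<times> ({0..1}::real set)"
    then obtain \<xi> x where xi: "\<xi> \<in> Sigma_full N" and x: "x \<in> {0..1::real}" and y: "y = (\<xi>, x)" by auto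
    have "(mkw N f \<xi> False, x) \<in> {z\<in>Sigma_A N f \<times> {0..1}. BigPi N z = (\<xi>, x)}"
      using fiber[OF D assms(1) xi x] by simp
    then show "y \<in> BigPi N ` (Sigma_A N f \<times> {0..1})" using y by force
  qed
  have card: "card {z\<in>Sigma_A N f \<times> {0..1}. BigPi N z = y} = 2" if yin: "y \<in> Sigma_full N \<times> {0..1}" for y
  proof -
    obtain \<xi> x where xi: "\<xi> \<in> Sigma_full N" and x: "x \<in> {0..1::real}" and y: "y = (\<xi>, x)"
      using yin by auto
    have "mkw N f \<xi> True 0 \<noteq> mkw N f \<xi> False 0"
      using assms(1) unfolding mkw_def by (simp add: bseq_0)
    then have "mkw N f \<xi> True \<noteq> mkw N f \<xi> False" by metis
    then show ?thesis unfolding y fiber[OF D assms(1) xi x] by simp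
  qed
  have cm: "continuous_map
           (subtopology (prod_topology seq_top euclideanreal) (Sigma_A N f \<times> {0..1}))
           (subtopology (prod_topology seq_top euclideanreal) (Sigma_full N \<times> {0..1}))
           (BigPi N)"
    unfolding continuous_map_in_subtopology
    using cont img1 by (auto simp: topspace_subtopology)
  show ?thesis using cm img1 img2 card commute[OF D] by blast
qed

end
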